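(* Consider a market with $M$ consumers $\mathcal{M}=\{1,\dots,M\}$ and $N$ suppliers $\mathcal{N}=\{1,\dots,N\}$, constants $d_0>0$, $\kappa_0>0$ with $Md_0<N\kappa_0$. For each $i\in\mathcal{M}$, $U_i$ is concave, strictly increasing and continuously differentiable on $[d_0,\infty)$ with $U_i(d_0)=0$; for each $i\in\mathcal{N}$, $C_i:\mathbb{R}\to\mathbb{R}$ is convex, strictly increasing and continuously differentiable with $C_i(s)\ge0$ for $s\ge0$ and $C_i(s)=0$ for $s\le0$. Define the game $\mathcal{G}$ whose players are $\mathcal{M}\cup\mathcal{N}$; consumer $i$ chooses $\theta_d^i\ge0$ and supplier $i$ chooses $\theta_s^i\ge 0$. For a profile $(\boldsymbol{\theta}_d,\boldsymbol{\theta}_s)$ with $\sum_i\theta_d^i+\sum_i\theta_s^i>0$, the price is $p(\boldsymbol{\theta}_d,\boldsymbol{\theta}_s)=\frac{\sum_i\theta_d^i+\sum_i\theta_s^i}{N\kappa_0-Md_0}$ and the payoffs are $$\pi_d^i=U_i\!\left(d_0+\frac{\theta_d^i}{p}\right)-p\,d_0-\theta_d^i\ (i\in\mathcal{M}),\qquad \pi_s^i=p\,\kappa_0-\theta_s^i-C_i\!\left(\kappa_0-\frac{\theta_s^i}{p}\right)\ (i\in\mathcal{N}),$$ with $p=p(\boldsymbol{\theta}_d,\boldsymbol{\theta}_s)$. If all parameters are zero, by convention each consumer is allocated $d_0$, each supplier $\kappa_0$, and the price is $0$ (so consumer payoffs are $U_i(d_0)=0$ and supplier payoffs are $-C_i(\kappa_0)$).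 Suppose some supplier is pivotal, i.e. $\frac{(N-1)\kappa_0}{Md_0}<1$. Then $\mathcal{G}$ admits no (pure) Nash equilibrium.
   Context: A Nash equilibrium is a profile $(\tilde{\boldsymbol{\theta}}_d,\tilde{\boldsymbol{\theta}}_s)$ of nonnegative parameters such that no consumer and no supplier can strictly increase its own payoff by unilaterally changing its own parameter to another nonnegative value. The quantity $\frac{(N-1)\kappa_0}{Md_0}$ is the residual supply index of a supplier. *)

theory Defs
  imports "HOL-Analysis.Analysis"
begin

text \<open>Consumers are indexed by {..<M}, suppliers by {..<N}. A profile is a pair of
  functions td, ts :: nat => real (only the values on the index sets matter).\<close>

definition total_bid :: "nat \<Rightarrow> nat \<Rightarrow> (nat \<Rightarrow> real) \<Rightarrow> (nat \<Rightarrow> real) \<Rightarrow> real" where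
  "total_bid M N td ts = (\<Sum>i<M. td i) + (\<Sum>i<N. ts i)"

definition price :: "nat \<Rightarrow> nat \<Rightarrow> real \<Rightarrow> real \<Rightarrow> (nat \<Rightarrow> real) \<Rightarrow> (nat \<Rightarrow> real) \<Rightarrow> real" where
  "price M N d0 k0 td ts =
     (if total_bid M N td ts = 0 then 0
      else total_bid M N td ts / (real N * k0 - real M * d0))"

definition payoff_d :: "(nat \<Rightarrow> real \<Rightarrow> real) \<Rightarrow> nat \<Rightarrow> nat \<Rightarrow> real \<Rightarrow> real
    \<Rightarrow> (nat \<Rightarrow> real) \<Rightarrow> (nat \<Rightarrow> real) \<Rightarrow> nat \<Rightarrow> real" where
  "payoff_d U M N d0 k0 td ts i =
     (if total_bid M N td ts = 0 then U i d0
      else (let p = price M N d0 k0 td ts in U i (d0 + td i / p) - p * d0 - td i))"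

definition payoff_s :: "(nat \<Rightarrow> real \<Rightarrow> real) \<Rightarrow> nat \<Rightarrow> nat \<Rightarrow> real \<Rightarrow> real
    \<Rightarrow> (nat \<Rightarrow> real) \<Rightarrow> (nat \<Rightarrow> real) \<Rightarrow> nat \<Rightarrow> real" where
  "payoff_s C M N d0 k0 td ts i =
     (if total_bid M N td ts = 0 then - C i k0
      else (let p = price M N d0 k0 td ts in p * k0 - ts i - C i (k0 - ts i / p)))"

definition nash_eq :: "(nat \<Rightarrow> real \<Rightarrow> real) \<Rightarrow> (nat \<Rightarrow> real \<Rightarrow> real) \<Rightarrow> nat \<Rightarrow> nat
    \<Rightarrow> real \<Rightarrow> real \<Rightarrow> (nat \<Rightarrow> real) \<Rightarrow> (nat \<Rightarrow> real) \<Rightarrow> bool" where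
  "nash_eq U C M N d0 k0 td ts \<longleftrightarrow>
     (\<forall>i<M. td i \<ge> 0) \<and> (\<forall>i<N. ts i \<ge> 0) \<and>
     (\<forall>i<M. \<forall>x\<ge>0. \<not> (payoff_d U M N d0 k0 (td(i := x)) ts i > payoff_d U M N d0 k0 td ts i)) \<and>
     (\<forall>i<N. \<forall>x\<ge>0. \<not> (payoff_s C M N d0 k0 td (ts(i := x)) i > payoff_s C M N d0 k0 td ts i))"

definition C1_on :: "real set \<Rightarrow> (real \<Rightarrow> real) \<Rightarrow> bool" where
  "C1_on S f \<longleftrightarrow> (\<exists>f'. (\<forall>x\<in>S. (f has_real_derivative f' x) (at x within S)) \<and> continuous_on S f')"

end

theory Submission
  imports Defs
begin

lemma sum_upd0:
  fixes ts :: "nat \<Rightarrow> real"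
  assumes "N \<ge> 1"
  shows "(\<Sum>i<N. (ts(0 := x)) i) = (\<Sum>i<N. ts i) - ts 0 + x"
proof -
  have z: "0 \<in> {..<N}" using assms by auto
  have "(\<Sum>i<N. (ts(0 := x)) i) = (ts(0:=x)) 0 + (\<Sum>i\<in>{..<N}-{0}. (ts(0 := x)) i)"
    using sum.remove[OF _ z] by blast
  also have "(\<Sum>i\<in>{..<N}-{0}. (ts(0 := x)) i) = (\<Sum>i\<in>{..<N}-{0}. ts i)"
    by (rule sum.cong) auto
  also have "(\<Sum>i<N. ts i) = ts 0 + (\<Sum>i\<in>{..<N}-{0}. ts i)"
    using sum.remove[OF _ z] by blast
  ultimately show ?thesis by simp
qed

theorem lemma1:
  fixes U C :: "nat \<Rightarrow> real \<Rightarrow> real" and M N :: nat and d0 k0 :: real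
  assumes "M \<ge> 1" and "N \<ge> 1"
    and "d0 > 0" and "k0 > 0" and "real M * d0 < real N * k0"
    and "\<And>i. i < M \<Longrightarrow> concave_on {d0..} (U i)"
    and "\<And>i. i < M \<Longrightarrow> strict_mono_on {d0..} (U i)"
    and "\<And>i. i < M \<Longrightarrow> C1_on {d0..} (U i)"
    and "\<And>i. i < M \<Longrightarrow> U i d0 = 0"
    and "\<And>i. i < N \<Longrightarrow> convex_on UNIV (C i)"
    and "\<And>i. i < N \<Longrightarrow> strict_mono_on {0..} (C i)"
    and "\<And>i. i < N \<Longrightarrow> C1_on UNIV (C i)"
    and "\<And>i s. i < N \<Longrightarrow> s \<ge> 0 \<Longrightarrow> C i s \<ge> 0"
    and "\<And>i s. i < N \<Longrightarrow> s \<le> 0 \<Longrightarrow> C i s = 0"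
    and pivotal: "(real N - 1) * k0 / (real M * d0) < 1"
  shows "\<not> (\<exists>td ts. nash_eq U C M N d0 k0 td ts)"
proof
  assume "\<exists>td ts. nash_eq U C M N d0 k0 td ts"
  then obtain td ts where ne: "nash_eq U C M N d0 k0 td ts" by blast
  define D where "D = real N * k0 - real M * d0"
  have Dpos: "D > 0" using assms(5) by (simp add: D_def)
  have Md: "real M * d0 > 0" using assms(1,3) by simp
  have "(real N - 1) * k0 < real M * d0" using pivotal Md by (simp add: divide_less_eq)
  hence Dk: "D < k0" by (simp add: D_def algebra_simps)
  have tdn: "\<forall>i<M. td i \<ge> 0" and tsn: "\<forall>i<N. ts i \<ge> 0" using ne by (auto simp: nash_eq_def)
  have N0: "0 < N" using assms(2) by simp
  define R where "R = total_bid M N td ts - ts 0"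
  have "(\<Sum>i<N. ts i) = ts 0 + (\<Sum>i\<in>{..<N}-{0}. ts i)"
    using sum.remove[of "{..<N}" 0 ts] N0 by simp
  moreover have "(\<Sum>i\<in>{..<N}-{0}. ts i) \<ge> 0" using tsn by (intro sum_nonneg) auto
  moreover have "(\<Sum>i<M. td i) \<ge> 0" using tdn by (intro sum_nonneg) auto
  ultimately have R0: "R \<ge> 0" by (simp add: R_def total_bid_def)
  define V where "V = payoff_s C M N d0 k0 td ts 0"
  define a where "a = k0 / D - 1"
  have apos: "a > 0" using Dk Dpos by (simp add: a_def)
  define x where "x = (\<bar>V\<bar> + \<bar>C 0 k0\<bar> + 1) / a + 1"
  have xpos: "x > 0" using apos unfolding x_def by (intro add_nonneg_pos divide_nonneg_pos) auto
  have ax: "a * x > \<bar>V\<bar> + \<bar>C 0 k0\<bar>"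
  proof -
    have "a * x = \<bar>V\<bar> + \<bar>C 0 k0\<bar> + 1 + a" using apos by (simp add: x_def field_simps)
    thus ?thesis using apos by simp
  qed
  have tot: "total_bid M N td (ts(0:=x)) = R + x"
    using sum_upd0[OF assms(2), of ts x] by (simp add: total_bid_def R_def)
  have totpos: "R + x > 0" using R0 xpos by simp
  define P where "P = (R + x) / D"
  have Ppos: "P > 0" using totpos Dpos by (simp add: P_def)
  have pr: "price M N d0 k0 td (ts(0:=x)) = P"
    using tot totpos by (simp add: price_def P_def D_def)
  have xP: "x / P \<le> D"
  proof -
    have "x / P = x * D / (R + x)" using Dpos totpos by (simp add: P_def field_simps)
    also have "\<dots> \<le> D" using R0 xpos Dpos totpos by (simp add: divide_le_eq mult_left_mono)
    finally show ?thesis .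
  qed
  have xP0: "x / P \<ge> 0" using xpos Ppos by simp
  have Cle: "C 0 (k0 - x / P) \<le> C 0 k0"
  proof -
    have sm: "strict_mono_on {0..} (C 0)" using assms(11) N0 by simp
    have "k0 - x / P \<ge> 0" using xP Dk by simp
    moreover have "x / P > 0" using xpos Ppos by simp
    ultimately have "C 0 (k0 - x / P) < C 0 k0" using sm assms(4)
      unfolding strict_mono_on_def by auto
    thus ?thesis by simp
  qed
  have "payoff_s C M N d0 k0 td (ts(0:=x)) 0 = P * k0 - x - C 0 (k0 - x / P)"
    using tot totpos pr by (simp add: payoff_s_def Let_def)
  also have "P * k0 - x \<ge> x * (k0 / D) - x"
  proof -
    have "P * k0 = (R + x) * (k0 / D)" by (simp add: P_def)
    moreover have "R * (k0 / D) \<ge> 0" using R0 Dpos assms(4) by simp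
    moreover have "(R + x) * (k0 / D) = R * (k0 / D) + x * (k0 / D)" by (rule distrib_right)
    ultimately show ?thesis by linarith
  qed
  hence "P * k0 - x - C 0 (k0 - x / P) \<ge> a * x - C 0 k0"
    using Cle by (simp add: a_def algebra_simps)
  hence "P * k0 - x - C 0 (k0 - x / P) > V" using ax by linarith
  finally have "payoff_s C M N d0 k0 td (ts(0:=x)) 0 > V" .
  moreover have "\<not> payoff_s C M N d0 k0 td (ts(0:=x)) 0 > V"
    using ne N0 xpos by (auto simp: nash_eq_def V_def)
  ultimately show False by simp
qed

end
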